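(* Assume (Moment): there exists $\lambda>0$ with $\int_{(0,\infty)}(e^{\lambda t}-1)\nu(dt)<\infty$. Then for every $\varepsilon>0$ there exists $m>0$ such that $$\liminf_{\ell\to\infty}-\frac1\ell\log\mathbb P\big(A(\ell)[\Pi_2^{(m)}]\ge\varepsilon\ell\big)>0.$$
   Context: Fix $d\ge2$; Euclidean norm $\|\cdot\|$. Fix a nonzero locally finite measure $\nu$ on $(0,\infty)$ and a Poisson point process $\Pi$ on $\mathbb R^d\times(0,\infty)$ with intensity $\mathrm{Leb}\otimes\nu$. For a point process $\eta$ on $\mathbb R^d\times[0,\infty)$, the mass of a Borel $B\subseteq\mathbb R^d$ is $M(B)[\eta]=\int_{B\times[0,\infty)}t\,\eta(dx,dt)$. Animals: finite connected graphs $\xi=(V,E)$ with $V\subseteq\mathbb R^d$, length $\sum_{\{x,y\}\in E}\|x-y\|$, mass $M(V)$. $\mathcal A(\ell)$: animals containing $0$ with length $\le\ell$; $A(\ell)[\eta]=\sup_{\xi\in\mathcal A(\ell)}M(\xi)[\eta]$. For $m>0$, $\Pi_2^{(m)}$ is the image of $\Pi$ under $(x,t)\mapsto(x,(t-m)^+)$. *)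

theory Defs
  imports "HOL-Probability.Probability"
begin

text \<open>Point configurations on R^d x [0,oo) are given by multiplicity functions
  (eta p = number/weight of points of the configuration located at p).\<close>

definition mass :: "'a set \<Rightarrow> ('a \<times> real \<Rightarrow> ennreal) \<Rightarrow> ennreal" where
  "mass B eta = (\<integral>\<^sup>+ p. eta p * ennreal (snd p) * indicator (B \<times> {0..}) p \<partial>count_space UNIV)"

definition push :: "('b \<Rightarrow> 'c) \<Rightarrow> ('b \<Rightarrow> ennreal) \<Rightarrow> 'c \<Rightarrow> ennreal" where
  "push f eta q = (\<integral>\<^sup>+ p. eta p * indicator (f -` {q}) p \<partial>count_space UNIV)"

definition count_in :: "('b \<Rightarrow> nat) \<Rightarrow> 'b set \<Rightarrow> ennreal" where
  "count_in N B = (\<integral>\<^sup>+ p. of_nat (N p) * indicator B p \<partial>count_space UNIV)"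

definition poisson_pp :: "'w measure \<Rightarrow> real measure \<Rightarrow> ('w \<Rightarrow> ('a::euclidean_space \<times> real) \<Rightarrow> nat) \<Rightarrow> bool" where
  "poisson_pp M nu PP \<longleftrightarrow> prob_space M \<and>
     (\<forall>B \<in> sets (lborel \<Otimes>\<^sub>M nu). (\<lambda>\<omega>. count_in (PP \<omega>) B) \<in> borel_measurable M) \<and>
     (\<forall>B \<in> sets (lborel \<Otimes>\<^sub>M nu). emeasure (lborel \<Otimes>\<^sub>M nu) B < \<infinity> \<longrightarrow>
        (\<forall>n::nat. measure M {\<omega> \<in> space M. count_in (PP \<omega>) B = of_nat n}
           = exp (- enn2real (emeasure (lborel \<Otimes>\<^sub>M nu) B)) *
             enn2real (emeasure (lborel \<Otimes>\<^sub>M nu) B) ^ n / fact n)) \<and>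
     (\<forall>B \<in> sets (lborel \<Otimes>\<^sub>M nu). emeasure (lborel \<Otimes>\<^sub>M nu) B = \<infinity> \<longrightarrow>
        (AE \<omega> in M. count_in (PP \<omega>) B = \<infinity>)) \<and>
     (\<forall>(I::nat set) B. finite I \<longrightarrow> (\<forall>i\<in>I. B i \<in> sets (lborel \<Otimes>\<^sub>M nu)) \<longrightarrow> disjoint_family_on B I \<longrightarrow>
        prob_space.indep_vars M (\<lambda>_. borel) (\<lambda>i \<omega>. count_in (PP \<omega>) (B i)) I)"

definition animal :: "'a set \<Rightarrow> 'a set set \<Rightarrow> bool" where
  "animal V E \<longleftrightarrow> finite V \<and> V \<noteq> {} \<and>
     E \<subseteq> {{x, y} | x y. x \<in> V \<and> y \<in> V \<and> x \<noteq> y} \<and>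
     (\<forall>x\<in>V. \<forall>y\<in>V. (x, y) \<in> {(u, v). {u, v} \<in> E}\<^sup>*)"

definition edge_length :: "'a::real_normed_vector set \<Rightarrow> real" where
  "edge_length e = (THE d. \<exists>x y. e = {x, y} \<and> d = norm (x - y))"

definition animal_length :: "'a::real_normed_vector set set \<Rightarrow> real" where
  "animal_length E = (\<Sum>e\<in>E. edge_length e)"

definition A_max :: "real \<Rightarrow> ('a::real_normed_vector \<times> real \<Rightarrow> ennreal) \<Rightarrow> ennreal" where
  "A_max l eta = (SUP VE \<in> {(V, E). animal V E \<and> 0 \<in> V \<and> animal_length E \<le> l}. mass (fst VE) eta)"

definition Pi2 :: "real \<Rightarrow> ('a \<times> real \<Rightarrow> nat) \<Rightarrow> 'a \<times> real \<Rightarrow> ennreal" where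
  "Pi2 m N = push (\<lambda>(x, t). (x, max (t - m) 0)) (\<lambda>p. of_nat (N p))"

text \<open>Outer probability (equals the probability for measurable events).\<close>
definition outer_prob :: "'w measure \<Rightarrow> 'w set \<Rightarrow> real" where
  "outer_prob M S = Inf {measure M T | T. T \<in> sets M \<and> S \<inter> space M \<subseteq> T}"

definition neg_log :: "real \<Rightarrow> ereal" where
  "neg_log p = (if p = 0 then \<infinity> else ereal (- ln p))"

end

theory Submission
  imports Defs
begin


fun wl :: "'a::real_normed_vector list \<Rightarrow> real" where
  "wl (x#y#xs) = norm (x - y) + wl (y#xs)"
| "wl _ = 0"

lemma wl_nonneg: "wl xs \<ge> 0"
  by (induction xs rule: wl.induct) auto

lemma wl_split: "wl (xs @ u # ys) = wl (xs @ [u]) + wl (u # ys)"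
proof (induction xs)
  case Nil then show ?case by simp
next
  case (Cons a xs)
  then show ?case by (cases xs) auto
qed

lemma wl_snoc: "xs \<noteq> [] \<Longrightarrow> wl (xs @ [x]) = wl xs + norm (last xs - x)"
proof (induction xs)
  case Nil then show ?case by simp
next
  case (Cons a xs)
  then show ?case by (cases xs) auto
qed

lemma wl_insert: "wl (xs @ u # v # u # ys) = wl (xs @ u # ys) + 2 * norm (u - v)"
  using wl_split[of xs u "v # u # ys"] wl_split[of xs u ys]
  by (simp add: norm_minus_commute)

lemma edge_length_pair: "edge_length {x, y} = norm (x - y)"
  unfolding edge_length_def
proof (rule the_equality)
  show "\<exists>a b. {x, y} = {a, b} \<and> norm (x - y) = norm (a - b)" by blast
next
  fix d assume "\<exists>a b. {x, y} = {a, b} \<and> d = norm (a - b)"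
  then obtain a b where "{x, y} = {a, b}" "d = norm (a - b)" by blast
  then show "d = norm (x - y)"
    by (auto simp: doubleton_eq_iff norm_minus_commute)
qed

lemma crossing:
  assumes "(a, b) \<in> R\<^sup>*" "a \<in> S" "b \<notin> S"
  shows "\<exists>u v. (u, v) \<in> R \<and> u \<in> S \<and> v \<notin> S"
  using assms
proof (induction rule: rtrancl_induct)
  case base then show ?case by simp
next
  case (step y z)
  then show ?case by (cases "y \<in> S") auto
qed

lemma hd_mid: "hd (xs @ u # zs) = (if xs = [] then u else hd xs)"
  by (cases xs) auto

lemma prim_walk:
  fixes V :: "'a::real_normed_vector set"
  assumes an: "animal V E" and z: "0 \<in> V"
  shows "\<exists>w. w \<noteq> [] \<and> hd w = 0 \<and> set w = V \<and> wl w \<le> 2 * animal_length E"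
proof -
  have finV: "finite V" and Esub: "E \<subseteq> {{x, y} | x y. x \<in> V \<and> y \<in> V \<and> x \<noteq> y}"
    and conn: "\<forall>x\<in>V. \<forall>y\<in>V. (x, y) \<in> {(u, v). {u, v} \<in> E}\<^sup>*"
    using an by (auto simp: animal_def)
  have finE: "finite E"
  proof -
    have "{{x, y} | x y. x \<in> V \<and> y \<in> V \<and> x \<noteq> y} \<subseteq> (\<lambda>(x,y). {x,y}) ` (V \<times> V)" by auto
    then show ?thesis using Esub finV by (meson finite_SigmaI finite_imageI finite_subset)
  qed
  have elnn: "\<And>e. e \<in> E \<Longrightarrow> edge_length e \<ge> 0"
    using Esub by (auto simp: edge_length_pair)
  have main: "\<And>n. 1 \<le> n \<Longrightarrow> n \<le> card V \<Longrightarrow> \<exists>S F w. S \<subseteq> V \<and> card S = n \<and> 0 \<in> S \<and> F \<subseteq> E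
      \<and> (\<forall>e\<in>F. e \<subseteq> S) \<and> w \<noteq> [] \<and> hd w = 0 \<and> set w = S \<and> wl w \<le> 2 * sum edge_length F"
  proof -
    fix n :: nat assume "1 \<le> n" "n \<le> card V"
    then show "\<exists>S F w. S \<subseteq> V \<and> card S = n \<and> 0 \<in> S \<and> F \<subseteq> E
      \<and> (\<forall>e\<in>F. e \<subseteq> S) \<and> w \<noteq> [] \<and> hd w = 0 \<and> set w = S \<and> wl w \<le> 2 * sum edge_length F"
    proof (induction n rule: dec_induct)
      case base
      show ?case
        using z by (intro exI[of _ "{0}"] exI[of _ "{}"] exI[of _ "[0]"]) simp
    next
      case (step n)
      have "\<exists>S F w. S \<subseteq> V \<and> card S = n \<and> 0 \<in> S \<and> F \<subseteq> E
      \<and> (\<forall>e\<in>F. e \<subseteq> S) \<and> w \<noteq> [] \<and> hd w = 0 \<and> set w = S \<and> wl w \<le> 2 * sum edge_length F"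
        using step.IH step.prems by simp
      then obtain S F w where S: "S \<subseteq> V" "card S = n" "0 \<in> S" "F \<subseteq> E" "\<forall>e\<in>F. e \<subseteq> S"
        "w \<noteq> []" "hd w = 0" "set w = S" "wl w \<le> 2 * sum edge_length F" by metis
      have "S \<noteq> V" using S(2) step.prems by auto
      then obtain y where y: "y \<in> V" "y \<notin> S" using S(1) by blast
      have "(0, y) \<in> {(u, v). {u, v} \<in> E}\<^sup>*" using conn z y by blast
      from crossing[OF this S(3) y(2)] obtain u v where uv: "{u, v} \<in> E" "u \<in> S" "v \<notin> S" by auto
      have vV: "v \<in> V" using Esub uv(1) by (auto simp: doubleton_eq_iff)
      from uv(2) S(8) obtain xs ys where w: "w = xs @ u # ys" by (metis split_list)
      define w' where "w' = xs @ u # v # u # ys"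
      have nF: "{u, v} \<notin> F" using S(5) uv(3) by auto
      have finF: "finite F" using S(4) finE finite_subset by blast
      have sF: "sum edge_length (insert {u, v} F) = norm (u - v) + sum edge_length F"
        using nF finF by (simp add: edge_length_pair)
      have finS: "finite S" using S(1) finV finite_subset by blast
      show ?case
      proof (intro exI conjI)
        show "insert v S \<subseteq> V" using S(1) vV by auto
        show "card (insert v S) = Suc n" using S(2) uv(3) finS by simp
        show "0 \<in> insert v S" using S(3) by simp
        show "insert {u, v} F \<subseteq> E" using S(4) uv(1) by simp
        show "\<forall>e\<in>insert {u, v} F. e \<subseteq> insert v S" using S(5) uv(2) by auto
        show "w' \<noteq> []" by (simp add: w'_def)
        show "hd w' = 0" using S(7) unfolding w'_def w by (simp add: hd_mid)
        show "set w' = insert v S" using S(8) unfolding w'_def w by auto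
        show "wl w' \<le> 2 * sum edge_length (insert {u, v} F)"
          using S(9) unfolding w'_def w sF by (simp add: wl_insert)
      qed
    qed
  qed
  have "1 \<le> card V" using z finV by (metis One_nat_def Suc_leI card_gt_0_iff empty_iff)
  from main[OF this order_refl] obtain S F w where S: "S \<subseteq> V" "card S = card V" "F \<subseteq> E"
    "w \<noteq> []" "hd w = 0" "set w = S" "wl w \<le> 2 * sum edge_length F" by blast
  have "S = V" using S(1,2) finV card_subset_eq by blast
  moreover have "sum edge_length F \<le> sum edge_length E"
    using S(3) finE elnn by (intro sum_mono2) auto
  ultimately show ?thesis using S unfolding animal_length_def by (intro exI[of _ w]) auto
qed


definition cell :: "real \<Rightarrow> 'a::euclidean_space \<Rightarrow> 'a" where
  "cell L x = (\<Sum>b\<in>Basis. (L * of_int (round ((x \<bullet> b) / L))) *\<^sub>R b)"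

lemma cell_inner: "b \<in> Basis \<Longrightarrow> cell L x \<bullet> b = L * of_int (round ((x \<bullet> b) / L))"
  by (simp add: cell_def inner_sum_left inner_Basis if_distrib cong: if_cong)

lemma cell_zero: "cell L 0 = 0"
  by (simp add: cell_def)

lemma cell_err:
  assumes "L > 0" "b \<in> Basis"
  shows "\<bar>x \<bullet> b - cell L x \<bullet> b\<bar> \<le> L / 2"
proof -
  have "\<bar>of_int (round ((x \<bullet> b) / L)) - (x \<bullet> b) / L\<bar> \<le> 1/2" by (rule of_int_round_abs_le)
  then have "L * \<bar>of_int (round ((x \<bullet> b) / L)) - (x \<bullet> b) / L\<bar> \<le> L * (1/2)"
    using assms(1) by (intro mult_left_mono) auto
  moreover have "L * \<bar>of_int (round ((x \<bullet> b) / L)) - (x \<bullet> b) / L\<bar> = \<bar>x \<bullet> b - cell L x \<bullet> b\<bar>"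
  proof -
    have "x \<bullet> b - cell L x \<bullet> b = L * ((x \<bullet> b) / L - of_int (round ((x \<bullet> b) / L)))"
      using assms by (simp add: cell_inner field_simps)
    then have "\<bar>x \<bullet> b - cell L x \<bullet> b\<bar> = L * \<bar>(x \<bullet> b) / L - of_int (round ((x \<bullet> b) / L))\<bar>"
      using assms(1) by (simp add: abs_mult)
    moreover have "\<bar>(x \<bullet> b) / L - of_int (round ((x \<bullet> b) / L))\<bar> = \<bar>of_int (round ((x \<bullet> b) / L)) - (x \<bullet> b) / L\<bar>"
      by (rule abs_minus_commute)
    ultimately show ?thesis by simp
  qed
  ultimately show ?thesis by simp
qed

definition D :: "real \<Rightarrow> 'a::euclidean_space set" where
  "D L = {v. \<forall>b\<in>Basis. \<exists>k::int. \<bar>k\<bar> \<le> 2 \<and> v \<bullet> b = L * of_int k}"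

lemma zero_D: "0 \<in> D L"
  unfolding D_def by (intro CollectI ballI exI[of _ "0::int"]) simp

lemma step_D:
  assumes L: "L > 0" and n: "norm (p - a) \<le> L"
  shows "cell L p - cell L a \<in> D L"
  unfolding D_def
proof (intro CollectI ballI)
  fix b :: 'a assume b: "b \<in> Basis"
  define u where "u = (p \<bullet> b) / L"
  define v where "v = (a \<bullet> b) / L"
  define k where "k = round u - round v"
  have "\<bar>(p - a) \<bullet> b\<bar> \<le> norm (p - a)" by (rule Basis_le_norm[OF b])
  then have 1: "\<bar>(p - a) \<bullet> b\<bar> \<le> L" using n by linarith
  have "u - v = ((p - a) \<bullet> b) / L"
    unfolding u_def v_def by (simp add: inner_diff_left diff_divide_distrib)
  then have "\<bar>u - v\<bar> = \<bar>(p - a) \<bullet> b\<bar> / \<bar>L\<bar>" by (simp only: abs_divide)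
  also have "\<dots> = \<bar>(p - a) \<bullet> b\<bar> / L" using L by (simp only: abs_of_pos)
  also have "\<dots> \<le> L / L" using L by (intro divide_right_mono[OF 1]) linarith
  also have "\<dots> = 1" using L by (intro divide_self) linarith
  finally have 2: "\<bar>u - v\<bar> \<le> 1" .
  have 3: "\<bar>of_int (round u) - u\<bar> \<le> 1/2" by (rule of_int_round_abs_le)
  have 4: "\<bar>of_int (round v) - v\<bar> \<le> 1/2" by (rule of_int_round_abs_le)
  have 5: "(of_int k :: real) = of_int (round u) - of_int (round v)" by (simp add: k_def)
  have "\<bar>(of_int k :: real)\<bar> \<le> 2" using 2 3 4 5 by linarith
  then have "\<bar>k\<bar> \<le> 2" by linarith
  moreover have "(cell L p - cell L a) \<bullet> b = L * of_int k"
    using b by (simp add: inner_diff_left cell_inner 5 u_def v_def right_diff_distrib)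
  ultimately show "\<exists>k::int. \<bar>k\<bar> \<le> 2 \<and> (cell L p - cell L a) \<bullet> b = L * of_int k" by blast
qed

lemma D_sub: "D L \<subseteq> (\<lambda>g. \<Sum>b\<in>Basis. g b *\<^sub>R b) ` (Basis \<rightarrow>\<^sub>E ((\<lambda>k::int. L * of_int k) ` {-2..2}))"
proof
  fix v :: 'a assume v: "v \<in> D L"
  define g where "g = restrict (\<lambda>b. v \<bullet> b) Basis"
  have "g \<in> Basis \<rightarrow>\<^sub>E ((\<lambda>k::int. L * of_int k) ` {-2..2})"
  proof (rule PiE_I)
    fix b :: 'a assume b: "b \<in> Basis"
    then obtain k :: int where "\<bar>k\<bar> \<le> 2" "v \<bullet> b = L * of_int k" using v unfolding D_def by blast
    then show "g b \<in> (\<lambda>k::int. L * of_int k) ` {-2..2}"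
      using b unfolding g_def by (intro image_eqI[of _ _ k]) auto
  qed (simp add: g_def)
  moreover have "v = (\<Sum>b\<in>Basis. g b *\<^sub>R b)"
    unfolding g_def by (simp add: euclidean_representation)
  ultimately show "v \<in> (\<lambda>g. \<Sum>b\<in>Basis. g b *\<^sub>R b) ` (Basis \<rightarrow>\<^sub>E ((\<lambda>k::int. L * of_int k) ` {-2..2}))"
    by blast
qed

lemma finite_D: "finite (D L)"
  by (rule finite_subset[OF D_sub]) (intro finite_imageI finite_PiE; simp)

lemma card_D: "card (D L :: 'a::euclidean_space set) \<le> 5 ^ DIM('a)"
proof -
  have "card (D L :: 'a set) \<le> card ((\<lambda>g. \<Sum>b\<in>Basis. g b *\<^sub>R b) ` (Basis \<rightarrow>\<^sub>E ((\<lambda>k::int. L * of_int k) ` {-2..2})) :: 'a set)"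
    by (rule card_mono[OF _ D_sub]) (intro finite_imageI finite_PiE; simp)
  also have "\<dots> \<le> card (Basis \<rightarrow>\<^sub>E ((\<lambda>k::int. L * of_int k) ` {-2..2}) :: ('a \<Rightarrow> real) set)"
    by (rule card_image_le) (intro finite_PiE; simp)
  also have "\<dots> = card ((\<lambda>k::int. L * of_int k) ` {-2..2}) ^ DIM('a)"
    by (simp add: card_PiE)
  also have "\<dots> \<le> 5 ^ DIM('a)"
  proof (rule power_mono)
    show "card ((\<lambda>k::int. L * of_int k) ` {-2..2}) \<le> 5"
      using card_image_le[of "{-2..2::int}" "\<lambda>k::int. L * of_int k"] by simp
  qed simp
  finally show ?thesis .
qed

lemma segment_steps:
  assumes L: "L > 0"
  shows "norm (x - a) \<le> real k * L \<Longrightarrow> \<exists>ss. set ss \<subseteq> D L \<and> length ss = k \<and> sum_list ss = cell L x - cell L (a::'a::euclidean_space)"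
proof (induction k arbitrary: a)
  case 0
  then have "x = a" by simp
  then show ?case by (intro exI[of _ "[]"]) simp
next
  case (Suc j)
  define p where "p = a + (1 / (real j + 1)) *\<^sub>R (x - a)"
  have "p - a = (1 / (real j + 1)) *\<^sub>R (x - a)" by (simp add: p_def)
  then have "norm (p - a) = norm (x - a) / (real j + 1)" by simp
  also have "\<dots> \<le> real (Suc j) * L / (real j + 1)" using Suc.prems by (intro divide_right_mono) auto
  also have "\<dots> = L" by (simp add: add.commute)
  finally have pa: "norm (p - a) \<le> L" .
  have "x - p = (1 - 1 / (real j + 1)) *\<^sub>R (x - a)"
    by (simp add: p_def algebra_simps)
  also have "1 - 1 / (real j + 1) = real j / (real j + 1)" by (simp add: field_simps)
  finally have "x - p = (real j / (real j + 1)) *\<^sub>R (x - a)" .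
  then have "norm (x - p) = real j / (real j + 1) * norm (x - a)" by simp
  also have "\<dots> \<le> real j / (real j + 1) * (real (Suc j) * L)"
    using Suc.prems by (intro mult_left_mono) auto
  also have "\<dots> = real j * L" by (simp add: field_simps)
  finally obtain ss where ss: "set ss \<subseteq> D L" "length ss = j" "sum_list ss = cell L x - cell L p"
    using Suc.IH by blast
  have "set ((cell L p - cell L a) # ss) \<subseteq> D L \<and> length ((cell L p - cell L a) # ss) = Suc j
     \<and> sum_list ((cell L p - cell L a) # ss) = cell L x - cell L a"
    using ss step_D[OF L pa] by auto
  then show ?case by blast
qed

definition Cover :: "real \<Rightarrow> 'a::euclidean_space list \<Rightarrow> 'a set" where
  "Cover L ss = {x. \<exists>i \<le> length ss. \<forall>b\<in>Basis. \<bar>(x - sum_list (take i ss)) \<bullet> b\<bar> \<le> 2 * L}"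

lemma Cover_mono: "Cover L ss \<subseteq> Cover L (ss @ tt)"
proof
  fix x assume "x \<in> Cover L ss"
  then obtain i where i: "i \<le> length ss" "\<forall>b\<in>Basis. \<bar>(x - sum_list (take i ss)) \<bullet> b\<bar> \<le> 2 * L"
    unfolding Cover_def by blast
  have "take i (ss @ tt) = take i ss" using i(1) by simp
  then show "x \<in> Cover L (ss @ tt)" unfolding Cover_def using i by (intro CollectI exI[of _ i]) auto
qed

lemma near_Cover:
  assumes L: "L > 0" and "sum_list ss = cell L a" "norm (x - a) \<le> L"
  shows "x \<in> Cover L ss"
  unfolding Cover_def
proof (intro CollectI exI[of _ "length ss"] conjI ballI)
  fix b :: 'a assume b: "b \<in> Basis"
  have "\<bar>(x - a) \<bullet> b\<bar> \<le> L" using Basis_le_norm[OF b, of "x - a"] assms(3) by linarith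
  moreover have "\<bar>a \<bullet> b - cell L a \<bullet> b\<bar> \<le> L / 2" by (rule cell_err[OF L b])
  moreover have "(x - sum_list (take (length ss) ss)) \<bullet> b = (x - a) \<bullet> b + (a \<bullet> b - cell L a \<bullet> b)"
    using assms(2) by (simp add: inner_diff_left)
  moreover have "\<bar>(x - a) \<bullet> b + (a \<bullet> b - cell L a \<bullet> b)\<bar> \<le> \<bar>(x - a) \<bullet> b\<bar> + \<bar>a \<bullet> b - cell L a \<bullet> b\<bar>"
    by (rule abs_triangle_ineq)
  ultimately show "\<bar>(x - sum_list (take (length ss) ss)) \<bullet> b\<bar> \<le> 2 * L"
    using L by linarith
qed simp


lemma discretize:
  assumes L: "L > 0"
  shows "w \<noteq> [] \<Longrightarrow> hd w = 0 \<Longrightarrow> \<exists>a ss. set ss \<subseteq> D L \<and> sum_list ss = cell L (a::'a::euclidean_space)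
      \<and> norm (last w - a) \<le> L \<and> L * real (length ss) \<le> 2 * (wl w - norm (last w - a)) \<and> set w \<subseteq> Cover L ss"
proof (induction w rule: rev_induct)
  case Nil then show ?case by simp
next
  case (snoc x w)
  show ?case
  proof (cases "w = []")
    case True
    then have x0: "x = 0" using snoc.prems by simp
    have c0: "sum_list [] = cell L (0::'a)" by (simp add: cell_zero)
    have "x \<in> Cover L []" using x0 L by (intro near_Cover[OF L c0]) simp
    then have "set ([] :: 'a list) \<subseteq> D L \<and> sum_list [] = cell L (0::'a)
      \<and> norm (last (w @ [x]) - 0) \<le> L \<and> L * real (length ([] :: 'a list)) \<le> 2 * (wl (w @ [x]) - norm (last (w @ [x]) - 0))
      \<and> set (w @ [x]) \<subseteq> Cover L []"
      using True x0 L c0 by simp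
    then show ?thesis by blast
  next
    case False
    then have "hd w = 0" using snoc.prems by simp
    then obtain a ss where IH: "set ss \<subseteq> D L" "sum_list ss = cell L a" "norm (last w - a) \<le> L"
      "L * real (length ss) \<le> 2 * (wl w - norm (last w - a))" "set w \<subseteq> Cover L ss"
      using snoc.IH False by blast
    define y where "y = last w"
    have wlx: "wl (w @ [x]) = wl w + norm (y - x)" using False wl_snoc y_def by blast
    have lastx: "last (w @ [x]) = x" by simp
    have tri: "norm (x - a) \<le> norm (y - x) + norm (y - a)"
      using norm_triangle_ineq[of "x - y" "y - a"] by (simp add: norm_minus_commute)
    show ?thesis
    proof (cases "norm (x - a) \<le> L")
      case True
      have "x \<in> Cover L ss" by (rule near_Cover[OF L IH(2) True])
      then have "set (w @ [x]) \<subseteq> Cover L ss" using IH(5) by auto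
      moreover have "L * real (length ss) \<le> 2 * (wl (w @ [x]) - norm (last (w @ [x]) - a))"
        unfolding wlx lastx using IH(4) tri unfolding y_def by (smt (verit))
      ultimately show ?thesis using IH(1,2) True lastx by (intro exI[of _ a] exI[of _ ss]) simp
    next
      case False
      define r where "r = norm (x - a)"
      have rL: "L < r" using False r_def by simp
      define k where "k = nat \<lceil>r / L\<rceil>"
      have rk0: "0 \<le> r / L" using L rL by simp
      have kr: "real k = of_int \<lceil>r / L\<rceil>" unfolding k_def using rk0 by simp
      have k1: "r / L \<le> real k" unfolding kr by (rule le_of_int_ceiling)
      have k2: "real k < r / L + 1" unfolding kr using ceiling_correct[of "r / L"] by linarith
      have rLe: "L * (r / L) = r" using L by simp
      have "r \<le> L * real k" using mult_left_mono[OF k1, of L] L rLe by simp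
      then have "norm (x - a) \<le> real k * L" unfolding r_def by (simp add: mult.commute)
      from segment_steps[OF L this] obtain seg where seg: "set seg \<subseteq> D L" "length seg = k"
        "sum_list seg = cell L x - cell L a" by blast
      have "L * real k < L * (r / L + 1)" using mult_strict_left_mono[OF k2 L] .
      then have Lk: "L * real k < r + L" using rLe by (simp add: distrib_left)
      have len: "L * real (length (ss @ seg)) \<le> 2 * (wl (w @ [x]) - norm (last (w @ [x]) - x))"
        using IH(4) Lk rL tri seg(2) unfolding wlx lastx y_def r_def by (simp add: distrib_left)
      have "x \<in> Cover L (ss @ seg)" using IH(2) seg(3) L by (intro near_Cover[OF L, where a=x and x=x]) simp_all
      moreover have "set w \<subseteq> Cover L (ss @ seg)" using IH(5) Cover_mono by blast
      ultimately have "set (w @ [x]) \<subseteq> Cover L (ss @ seg)" by auto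
      moreover have "sum_list (ss @ seg) = cell L x" using IH(2) seg(3) by simp
      moreover have "set (ss @ seg) \<subseteq> D L" using IH(1) seg(1) by simp
      ultimately show ?thesis using len L lastx by (intro exI[of _ x] exI[of _ "ss @ seg"]) simp
    qed
  qed
qed


lemma animal_cover:
  fixes V :: "'a::euclidean_space set"
  assumes L: "L > 0" and an: "animal V E" and z: "0 \<in> V" and len: "animal_length E \<le> l"
  shows "\<exists>ss. set ss \<subseteq> D L \<and> length ss = nat \<lfloor>4 * l / L\<rfloor> \<and> V \<subseteq> Cover L ss"
proof -
  obtain w where w: "w \<noteq> []" "hd w = 0" "set w = V" "wl w \<le> 2 * animal_length E"
    using prim_walk[OF an z] by blast
  obtain a ss where ss: "set ss \<subseteq> D L" "sum_list ss = cell L a" "norm (last w - a) \<le> L"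
      "L * real (length ss) \<le> 2 * (wl w - norm (last w - a))" "set w \<subseteq> Cover L ss"
    using discretize[OF L w(1,2)] by blast
  have "L * real (length ss) \<le> 4 * l" using ss(4) w(4) len norm_ge_zero[of "last w - a"] by (smt (verit))
  then have "real (length ss) \<le> 4 * l / L" using L by (simp add: le_divide_eq mult.commute)
  then have "int (length ss) \<le> \<lfloor>4 * l / L\<rfloor>" by (simp add: le_floor_iff)
  then have le: "length ss \<le> nat \<lfloor>4 * l / L\<rfloor>" by linarith
  define ss' where "ss' = ss @ replicate (nat \<lfloor>4 * l / L\<rfloor> - length ss) 0"
  have "set ss' \<subseteq> D L" using ss(1) zero_D unfolding ss'_def by auto
  moreover have "length ss' = nat \<lfloor>4 * l / L\<rfloor>" using le unfolding ss'_def by simp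
  moreover have "V \<subseteq> Cover L ss'" using ss(5) w(3) Cover_mono unfolding ss'_def by blast
  ultimately show ?thesis by blast
qed

definition cube :: "'a::euclidean_space \<Rightarrow> real \<Rightarrow> 'a set" where
  "cube c r = {x. \<forall>b\<in>Basis. \<bar>(x - c) \<bullet> b\<bar> \<le> r}"

lemma cube_cbox: "cube c r = cbox (c - r *\<^sub>R One) (c + r *\<^sub>R One)"
  unfolding cube_def cbox_def by (auto simp: inner_diff_left inner_add_left abs_le_iff)

lemma emeasure_cube: "r \<ge> 0 \<Longrightarrow> emeasure lborel (cube (c::'a::euclidean_space) r) = ennreal ((2 * r) ^ DIM('a))"
  unfolding cube_cbox by (simp add: emeasure_lborel_cbox_eq inner_diff_left inner_add_left)

lemma Cover_cubes: "Cover L ss = (\<Union>i\<in>{..length ss}. cube (sum_list (take i ss)) (2 * L))"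
  unfolding Cover_def cube_def by auto

lemma Cover_sets: "Cover L ss \<in> sets lborel"
  unfolding Cover_cubes cube_cbox by auto

lemma Cover_measure:
  assumes "L \<ge> 0"
  shows "emeasure lborel (Cover L (ss::'a::euclidean_space list)) \<le> ennreal ((real (length ss) + 1) * (4 * L) ^ DIM('a))"
proof -
  have "emeasure lborel (Cover L ss) \<le> (\<Sum>i\<in>{..length ss}. emeasure lborel (cube (sum_list (take i ss)) (2 * L)))"
    unfolding Cover_cubes by (intro emeasure_subadditive_finite) (auto simp: cube_cbox)
  also have "\<dots> = (\<Sum>i\<in>{..length ss}. ennreal ((4 * L) ^ DIM('a)))"
    using assms by (intro sum.cong refl) (simp add: emeasure_cube)
  also have "\<dots> = ennreal ((real (length ss) + 1) * (4 * L) ^ DIM('a))"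
    using assms by (simp add: ennreal_of_nat_eq_real_of_nat ennreal_mult add.commute)
  finally show ?thesis .
qed


lemma sf_nu:
  fixes nu :: "real measure"
  assumes nu_sets: "sets nu = sets borel"
    and nu_support: "emeasure nu {..0} = 0"
    and nu_locfin: "\<forall>a b. 0 < a \<longrightarrow> a \<le> b \<longrightarrow> emeasure nu {a..b} < \<infinity>"
  shows "sigma_finite_measure nu"
proof
  define A where "A = insert {..0::real} (range (\<lambda>n::nat. {1 / (real n + 1) .. real n + 1}))"
  have sp: "space nu = UNIV" using sets_eq_imp_space_eq[OF nu_sets] by simp
  have "\<Union>A = UNIV"
  proof (intro set_eqI iffI)
    fix t :: real assume "t \<in> UNIV"
    show "t \<in> \<Union>A"
    proof (cases "t \<le> 0")
      case True then show ?thesis unfolding A_def by auto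
    next
      case False
      then have t: "t > 0" by simp
      define n where "n = nat \<lceil>t + 1 / t\<rceil>"
      have n1: "t + 1 / t \<le> real n" unfolding n_def by linarith
      have "0 < 1 / t" using t by simp
      then have tn: "t \<le> real n + 1" using n1 by linarith
      have "1 / t \<le> real n + 1" using n1 t by linarith
      then have "1 / (real n + 1) \<le> t" using t by (simp add: divide_le_eq mult.commute)
      then have "t \<in> {1 / (real n + 1) .. real n + 1}" using tn by simp
      then show ?thesis unfolding A_def by blast
    qed
  qed simp
  moreover have "countable A" unfolding A_def by (intro countable_insert countable_image) simp
  moreover have "A \<subseteq> sets nu"
  proof -
    have "{..0::real} \<in> sets borel" by simp
    moreover have "\<And>n::nat. {1 / (real n + 1) .. real n + 1} \<in> sets borel" by simp
    ultimately have "A \<subseteq> sets borel" unfolding A_def by blast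
    then show ?thesis using nu_sets by simp
  qed
  moreover have "\<forall>a\<in>A. emeasure nu a \<noteq> \<infinity>"
  proof
    fix a assume "a \<in> A"
    then consider "a = {..0}" | n :: nat where "a = {1 / (real n + 1) .. real n + 1}" unfolding A_def by blast
    then show "emeasure nu a \<noteq> \<infinity>"
    proof cases
      case 1 then show ?thesis using nu_support by simp
    next
      case (2 n)
      have "1 / (real n + 1) \<le> 1" by simp
      then have "1 / (real n + 1) \<le> real n + 1" by linarith
      then show ?thesis using nu_locfin 2 by (simp add: less_top[symmetric])
    qed
  qed
  ultimately have "countable A \<and> A \<subseteq> sets nu \<and> \<Union>A = space nu \<and> (\<forall>a\<in>A. emeasure nu a \<noteq> \<infinity>)"
    using sp by simp
  then show "\<exists>A. countable A \<and> A \<subseteq> sets nu \<and> \<Union>A = space nu \<and> (\<forall>a\<in>A. emeasure nu a \<noteq> \<infinity>)"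
    by (rule exI)
qed

lemma poisson_mgf:
  fixes nu :: "real measure" and M :: "'w measure"
    and PP :: "'w \<Rightarrow> ('a::euclidean_space \<times> real) \<Rightarrow> nat"
  assumes P: "poisson_pp M nu PP"
    and B: "B \<in> sets (lborel \<Otimes>\<^sub>M nu)" "emeasure (lborel \<Otimes>\<^sub>M nu) B < \<infinity>"
  shows "(AE \<omega> in M. count_in (PP \<omega>) B \<noteq> \<infinity>)
     \<and> (\<integral>\<^sup>+ \<omega>. ennreal (exp (a * enn2real (count_in (PP \<omega>) B))) \<partial>M)
         = ennreal (exp (enn2real (emeasure (lborel \<Otimes>\<^sub>M nu) B) * (exp a - 1)))"
proof -
  interpret prob_space M using P unfolding poisson_pp_def by blast
  define c where "c = enn2real (emeasure (lborel \<Otimes>\<^sub>M nu) B)"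
  define X where "X \<omega> = count_in (PP \<omega>) B" for \<omega>
  have Xm[measurable]: "X \<in> borel_measurable M" using P B(1) unfolding poisson_pp_def X_def by blast
  have pr: "\<And>n::nat. measure M {\<omega> \<in> space M. X \<omega> = of_nat n} = exp (- c) * c ^ n / fact n"
    using P B unfolding poisson_pp_def X_def c_def by blast
  define E where "E n = {\<omega> \<in> space M. X \<omega> = of_nat n}" for n :: nat
  have Es[measurable]: "\<And>n. E n \<in> sets M" unfolding E_def by measurable
  have dE: "disjoint_family E" unfolding disjoint_family_on_def E_def by auto
  have c0: "c \<ge> 0" unfolding c_def by simp
  have ps: "(\<lambda>n. exp (- c) * c ^ n / fact n) sums 1"
  proof -
    have "(\<lambda>n. exp (- c) * (c ^ n /\<^sub>R fact n)) sums (exp (- c) * exp c)"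
      by (intro sums_mult exp_converges)
    moreover have "exp (- c) * exp c = 1" by (simp add: exp_minus field_simps)
    moreover have "(\<lambda>n. exp (- c) * (c ^ n /\<^sub>R fact n)) = (\<lambda>n. exp (- c) * c ^ n / fact n)"
      by (rule ext) (simp add: divide_inverse)
    ultimately show ?thesis by simp
  qed
  have "(\<lambda>n. measure M (E n)) sums measure M (\<Union>n. E n)"
    by (rule finite_measure_UNION) (auto simp: dE)
  then have "(\<lambda>n. exp (- c) * c ^ n / fact n) sums measure M (\<Union>n. E n)"
    unfolding E_def pr .
  then have "measure M (\<Union>n. E n) = 1" using ps sums_unique2 by blast
  then have AEE: "AE \<omega> in M. \<omega> \<in> (\<Union>n. E n)" by (rule AE_prob_1)
  have AE1: "AE \<omega> in M. X \<omega> \<noteq> \<infinity>"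
    using AEE by eventually_elim (auto simp: E_def)
  define g where "g n = ennreal (exp (a * real n))" for n :: nat
  have "AE \<omega> in M. ennreal (exp (a * enn2real (X \<omega>))) = (\<Sum>n. g n * indicator (E n) \<omega>)"
    using AEE
  proof eventually_elim
    case (elim \<omega>)
    then obtain k where k: "\<omega> \<in> E k" by blast
    then have Xk: "X \<omega> = of_nat k" unfolding E_def by simp
    have ind: "\<And>n. indicator (E n) \<omega> = (if n = k then 1 else (0::ennreal))"
      using k unfolding E_def by (auto simp: indicator_def)
    have "(\<Sum>n. g n * indicator (E n) \<omega>) = (\<Sum>n\<in>{k}. g n * indicator (E n) \<omega>)"
      by (rule suminf_finite) (auto simp: ind)
    also have "\<dots> = g k" by (simp add: ind)
    finally show ?case using Xk by (simp add: g_def)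
  qed
  then have "(\<integral>\<^sup>+ \<omega>. ennreal (exp (a * enn2real (X \<omega>))) \<partial>M) = (\<integral>\<^sup>+ \<omega>. (\<Sum>n. g n * indicator (E n) \<omega>) \<partial>M)"
    by (rule nn_integral_cong_AE)
  also have "\<dots> = (\<Sum>n. \<integral>\<^sup>+ \<omega>. g n * indicator (E n) \<omega> \<partial>M)"
    by (rule nn_integral_suminf) measurable
  also have "\<dots> = (\<Sum>n. ennreal (exp (a * real n) * (exp (- c) * c ^ n / fact n)))"
  proof (intro suminf_cong)
    fix n
    have "(\<integral>\<^sup>+ \<omega>. g n * indicator (E n) \<omega> \<partial>M) = ennreal (exp (a * real n)) * ennreal (exp (- c) * c ^ n / fact n)"
      by (simp add: nn_integral_cmult_indicator emeasure_eq_measure g_def E_def[symmetric] pr[unfolded E_def[symmetric]])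
    also have "\<dots> = ennreal (exp (a * real n) * (exp (- c) * c ^ n / fact n))"
      using c0 by (intro ennreal_mult[symmetric]) auto
    finally show "(\<integral>\<^sup>+ \<omega>. g n * indicator (E n) \<omega> \<partial>M) = ennreal (exp (a * real n) * (exp (- c) * c ^ n / fact n))" .
  qed
  also have "\<dots> = ennreal (exp (c * (exp a - 1)))"
  proof (rule suminf_ennreal_eq)
    show "\<And>n. 0 \<le> exp (a * real n) * (exp (- c) * c ^ n / fact n)" using c0 by simp
    have "(\<lambda>n. exp (- c) * ((c * exp a) ^ n /\<^sub>R fact n)) sums (exp (- c) * exp (c * exp a))"
      by (intro sums_mult exp_converges)
    moreover have "\<And>n. exp (- c) * ((c * exp a) ^ n /\<^sub>R fact n) = exp (a * real n) * (exp (- c) * c ^ n / fact n)"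
    proof -
      fix n
      have e: "exp a ^ n = exp (a * real n)" by (subst exp_of_nat_mult[symmetric]) (simp add: ac_simps)
      show "exp (- c) * ((c * exp a) ^ n /\<^sub>R fact n) = exp (a * real n) * (exp (- c) * c ^ n / fact n)"
        unfolding power_mult_distrib e by (simp add: divide_inverse ac_simps)
    qed
    moreover have "exp (- c) * exp (c * exp a) = exp (c * (exp a - 1))"
    proof -
      have "c * (exp a - 1) = - c + c * exp a" by (simp add: algebra_simps)
      then show ?thesis by (simp only: exp_add)
    qed
    ultimately show "(\<lambda>n. exp (a * real n) * (exp (- c) * c ^ n / fact n)) sums exp (c * (exp a - 1))"
      by simp
  qed
  finally show ?thesis using AE1 unfolding X_def c_def by blast
qed


lemma poisson_prod_mgf:
  fixes nu :: "real measure" and M :: "'w measure"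
    and PP :: "'w \<Rightarrow> ('a::euclidean_space \<times> real) \<Rightarrow> nat" and I :: "nat set"
  assumes P: "poisson_pp M nu PP" and I: "finite I"
    and B: "\<And>i. i \<in> I \<Longrightarrow> B i \<in> sets (lborel \<Otimes>\<^sub>M nu)" "\<And>i. i \<in> I \<Longrightarrow> emeasure (lborel \<Otimes>\<^sub>M nu) (B i) < \<infinity>"
    and dj: "disjoint_family_on B I"
  shows "(AE \<omega> in M. \<forall>i\<in>I. count_in (PP \<omega>) (B i) \<noteq> \<infinity>)
     \<and> (\<integral>\<^sup>+ \<omega>. (\<Prod>i\<in>I. ennreal (exp (a i * enn2real (count_in (PP \<omega>) (B i))))) \<partial>M)
         = (\<Prod>i\<in>I. ennreal (exp (enn2real (emeasure (lborel \<Otimes>\<^sub>M nu) (B i)) * (exp (a i) - 1))))"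
proof -
  interpret prob_space M using P unfolding poisson_pp_def by blast
  have ind: "indep_vars (\<lambda>_. borel) (\<lambda>i \<omega>. count_in (PP \<omega>) (B i)) I"
    using P I B(1) dj unfolding poisson_pp_def by blast
  have ind2: "indep_vars (\<lambda>_. borel) (\<lambda>i \<omega>. ennreal (exp (a i * enn2real (count_in (PP \<omega>) (B i))))) I"
    using indep_vars_compose2[OF ind, of "\<lambda>i c. ennreal (exp (a i * enn2real c))" "\<lambda>_. borel"]
    by simp
  have "(\<integral>\<^sup>+ \<omega>. (\<Prod>i\<in>I. ennreal (exp (a i * enn2real (count_in (PP \<omega>) (B i))))) \<partial>M)
      = (\<Prod>i\<in>I. \<integral>\<^sup>+ \<omega>. ennreal (exp (a i * enn2real (count_in (PP \<omega>) (B i)))) \<partial>M)"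
    by (rule indep_vars_nn_integral[OF I ind2]) simp
  also have "\<dots> = (\<Prod>i\<in>I. ennreal (exp (enn2real (emeasure (lborel \<Otimes>\<^sub>M nu) (B i)) * (exp (a i) - 1))))"
    by (intro prod.cong refl) (use poisson_mgf[OF P B(1) B(2)] in blast)
  finally have 1: "(\<integral>\<^sup>+ \<omega>. (\<Prod>i\<in>I. ennreal (exp (a i * enn2real (count_in (PP \<omega>) (B i))))) \<partial>M)
      = (\<Prod>i\<in>I. ennreal (exp (enn2real (emeasure (lborel \<Otimes>\<^sub>M nu) (B i)) * (exp (a i) - 1))))" .
  have 2: "AE \<omega> in M. \<forall>i\<in>I. count_in (PP \<omega>) (B i) \<noteq> \<infinity>"
    by (rule AE_finite_allI[OF I]) (use poisson_mgf[OF P B(1) B(2)] in blast)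
  show ?thesis using 1 2 by blast
qed


definition Bj :: "'a set \<Rightarrow> real \<Rightarrow> nat \<Rightarrow> ('a \<times> real) set" where
  "Bj U m j = U \<times> {m + real j <.. m + real j + 1}"

definition What :: "'a set \<Rightarrow> real \<Rightarrow> ('a \<times> real \<Rightarrow> nat) \<Rightarrow> ennreal" where
  "What U m N = (\<Sum>j. ennreal (real j + 1) * count_in N (Bj U m j))"

lemma Pi2_pos:
  assumes "s > 0"
  shows "Pi2 m N (x, s) = of_nat (N (x, s + m))"
proof -
  have "(\<lambda>(y, t). (y, max (t - m) 0)) -` {(x, s)} = {(x, s + m)}"
    using assms by (auto simp: max_def split: if_splits)
  then show ?thesis unfolding Pi2_def push_def by simp
qed

lemma mass_le_What:
  assumes V: "V \<subseteq> U"
  shows "mass V (Pi2 m N) \<le> What U m N"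
proof -
  define h where "h p = of_nat (N p) * (\<Sum>j. ennreal (real j + 1) * indicator (Bj U m j) p)" for p
  define sh where "sh q = (fst q, snd q + m)" for q :: "'a \<times> real"
  have pt: "Pi2 m N q * ennreal (snd q) * indicator (V \<times> {0..}) q \<le> h (sh q)" for q
  proof (cases q)
    case (Pair x s)
    show ?thesis
    proof (cases "s > 0 \<and> x \<in> V")
      case False
      then have "ennreal s * indicator (V \<times> {0..}) (x, s) = 0"
        by (auto simp: indicator_def ennreal_eq_0_iff)
      then have "Pi2 m N q * ennreal (snd q) * indicator (V \<times> {0..}) q = 0"
        unfolding Pair by (metis mult.assoc mult_zero_right snd_conv)
      then show ?thesis by (metis zero_le)
    next
      case True
      then have s: "s > 0" and x: "x \<in> V" by auto
      define j0 where "j0 = nat \<lceil>s\<rceil> - 1"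
      have c1: "\<lceil>s\<rceil> \<ge> 1" using s by linarith
      have j0r: "real j0 = of_int \<lceil>s\<rceil> - 1" unfolding j0_def using c1 by linarith
      have lo: "real j0 < s" using j0r ceiling_correct[of s] by linarith
      have hi: "s \<le> real j0 + 1" using j0r ceiling_correct[of s] by linarith
      have inB: "(x, s + m) \<in> Bj U m j0" unfolding Bj_def using lo hi V x by auto
      have ind1: "ennreal (real j0 + 1) * indicator (Bj U m j0) (x, s + m) = ennreal (real j0 + 1)"
        using inB by (simp only: indicator_simps mult_1_right)
      have es: "ennreal s \<le> ennreal (real j0 + 1) * indicator (Bj U m j0) (x, s + m)"
        unfolding ind1 using hi by (rule ennreal_leI)
      define f where "f j = ennreal (real j + 1) * indicator (Bj U m j) (x, s + m)" for j
      have "sum f {j0} = f j0" by simp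
      then have fj: "f j0 \<le> suminf f" using sum_le_suminf[of f "{j0}"] by simp
      have e2: "f j0 = ennreal (real j0 + 1) * indicator (Bj U m j0) (x, s + m)" by (simp only: f_def)
      have "ennreal s \<le> suminf f" using es e2 fj by (metis order.trans)
      then have le: "ennreal s \<le> (\<Sum>j. ennreal (real j + 1) * indicator (Bj U m j) (x, s + m))"
        unfolding f_def .
      have "Pi2 m N q * ennreal (snd q) * indicator (V \<times> {0..}) q = of_nat (N (x, s + m)) * ennreal s"
        using Pair s x by (simp add: Pi2_pos)
      also have "\<dots> \<le> of_nat (N (x, s + m)) * (\<Sum>j. ennreal (real j + 1) * indicator (Bj U m j) (x, s + m))"
        by (rule mult_left_mono[OF le]) simp
      also have "\<dots> = h (sh q)" unfolding h_def sh_def using Pair by simp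
      finally show ?thesis .
    qed
  qed
  have "mass V (Pi2 m N) \<le> (\<integral>\<^sup>+ q. h (sh q) \<partial>count_space UNIV)"
    unfolding mass_def by (intro nn_integral_mono pt)
  also have "\<dots> = (\<integral>\<^sup>+ p. h p \<partial>count_space UNIV)"
  proof (rule nn_integral_bij_count_space)
    show "bij_betw sh UNIV UNIV"
      by (rule bij_betwI[of sh UNIV UNIV "\<lambda>q. (fst q, snd q - m)"]) (auto simp: sh_def)
  qed
  also have "\<dots> = (\<integral>\<^sup>+ p. (\<Sum>j. ennreal (real j + 1) * (of_nat (N p) * indicator (Bj U m j) p)) \<partial>count_space UNIV)"
    unfolding h_def ennreal_suminf_cmult[symmetric] by (simp only: mult.left_commute)
  also have "\<dots> = (\<Sum>j. \<integral>\<^sup>+ p. ennreal (real j + 1) * (of_nat (N p) * indicator (Bj U m j) p) \<partial>count_space UNIV)"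
    by (rule nn_integral_suminf) simp
  also have "\<dots> = What U m N"
    unfolding What_def count_in_def by (intro suminf_cong nn_integral_cmult) simp
  finally show ?thesis .
qed


lemma Bj_facts:
  fixes nu :: "real measure" and U :: "'a::euclidean_space set"
  assumes nu_sets: "sets nu = sets borel"
    and nu_support: "emeasure nu {..0} = 0"
    and nu_locfin: "\<forall>a b. 0 < a \<longrightarrow> a \<le> b \<longrightarrow> emeasure nu {a..b} < \<infinity>"
    and U: "U \<in> sets lborel" "emeasure lborel U < \<infinity>" and m: "m > 0"
  shows "Bj U m j \<in> sets (lborel \<Otimes>\<^sub>M nu)"
    and "emeasure (lborel \<Otimes>\<^sub>M nu) (Bj U m j) = emeasure lborel U * emeasure nu {m + real j <.. m + real j + 1}"
    and "emeasure (lborel \<Otimes>\<^sub>M nu) (Bj U m j) < \<infinity>"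
    and "disjoint_family (Bj U m)"
proof -
  interpret sf: sigma_finite_measure nu using sf_nu[OF nu_sets nu_support nu_locfin] .
  have Is: "{m + real j <.. m + real j + 1} \<in> sets nu" using nu_sets by simp
  show B: "Bj U m j \<in> sets (lborel \<Otimes>\<^sub>M nu)" unfolding Bj_def using U(1) Is by (rule pair_measureI)
  show e: "emeasure (lborel \<Otimes>\<^sub>M nu) (Bj U m j) = emeasure lborel U * emeasure nu {m + real j <.. m + real j + 1}"
    unfolding Bj_def by (rule sf.emeasure_pair_measure_Times[OF U(1) Is])
  have "emeasure nu {m + real j <.. m + real j + 1} \<le> emeasure nu {m + real j .. m + real j + 1}"
    using nu_sets by (intro emeasure_mono) auto
  also have "\<dots> < \<infinity>" using nu_locfin m by simp
  finally have "emeasure nu {m + real j <.. m + real j + 1} < \<infinity>" .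
  then show "emeasure (lborel \<Otimes>\<^sub>M nu) (Bj U m j) < \<infinity>"
    unfolding e using U(2) by (simp add: ennreal_mult_less_top)
  show "disjoint_family (Bj U m)"
    unfolding disjoint_family_on_def Bj_def
  proof (intro ballI impI)
    fix i j :: nat assume "i \<noteq> j"
    then have "{m + real i <.. m + real i + 1} \<inter> {m + real j <.. m + real j + 1} = {}"
    proof (cases "i < j")
      case True
      then have "real i + 1 \<le> real j" by simp
      then show ?thesis by auto
    next
      case False
      then have "real j + 1 \<le> real i" using \<open>i \<noteq> j\<close> by simp
      then show ?thesis by auto
    qed
    then show "U \<times> {m + real i <.. m + real i + 1} \<inter> U \<times> {m + real j <.. m + real j + 1} = {}" by blast
  qed
qed


lemma WJ_bound:
  fixes nu :: "real measure" and M :: "'w measure"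
    and PP :: "'w \<Rightarrow> ('a::euclidean_space \<times> real) \<Rightarrow> nat" and U :: "'a set"
  assumes P: "poisson_pp M nu PP"
    and nu_sets: "sets nu = sets borel"
    and nu_support: "emeasure nu {..0} = 0"
    and nu_locfin: "\<forall>a b. 0 < a \<longrightarrow> a \<le> b \<longrightarrow> emeasure nu {a..b} < \<infinity>"
    and U: "U \<in> sets lborel" "emeasure lborel U < \<infinity>" and m: "m > 0"
    and lam: "lam \<ge> 0" and x: "x \<ge> 0"
  shows "emeasure M {\<omega> \<in> space M. ennreal x < (\<Sum>j<J. ennreal (real j + 1) * count_in (PP \<omega>) (Bj U m j))}
    \<le> ennreal (exp (- lam * x)) *
       (\<Prod>j<J. ennreal (exp (enn2real (emeasure (lborel \<Otimes>\<^sub>M nu) (Bj U m j)) * (exp (lam * (real j + 1)) - 1))))"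
proof -
  interpret prob_space M using P unfolding poisson_pp_def by blast
  note BF = Bj_facts[OF nu_sets nu_support nu_locfin U m]
  define X where "X j \<omega> = count_in (PP \<omega>) (Bj U m j)" for j \<omega>
  have Xm[measurable]: "\<And>j. X j \<in> borel_measurable M"
    using P BF(1) unfolding poisson_pp_def X_def by blast
  define Z where "Z \<omega> = (\<Prod>j<J. ennreal (exp (lam * (real j + 1) * enn2real (X j \<omega>))))" for \<omega>
  define R where "R = (\<Prod>j<J. ennreal (exp (enn2real (emeasure (lborel \<Otimes>\<^sub>M nu) (Bj U m j)) * (exp (lam * (real j + 1)) - 1))))"
  define A where "A = {\<omega> \<in> space M. ennreal x < (\<Sum>j<J. ennreal (real j + 1) * X j \<omega>)}"
  have As[measurable]: "A \<in> sets M" unfolding A_def by measurable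
  have PM: "(AE \<omega> in M. \<forall>j\<in>{..<J}. X j \<omega> \<noteq> \<infinity>) \<and> (\<integral>\<^sup>+ \<omega>. Z \<omega> \<partial>M) = R"
    unfolding X_def Z_def R_def
    by (rule poisson_prod_mgf[OF P, of "{..<J}" "Bj U m" "\<lambda>j. lam * (real j + 1)"])
       (use BF in \<open>auto simp: disjoint_family_on_def disjoint_family_on_def\<close>)
  have "AE \<omega> in M. ennreal (exp (lam * x)) * indicator A \<omega> \<le> Z \<omega>"
    using PM[THEN conjunct1]
  proof eventually_elim
    case (elim \<omega>)
    show ?case
    proof (cases "\<omega> \<in> A")
      case False then show ?thesis by simp
    next
      case True
      define r where "r j = enn2real (X j \<omega>)" for j
      have r0: "\<And>j. r j \<ge> 0" unfolding r_def by simp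
      have Xr: "\<And>j. j < J \<Longrightarrow> X j \<omega> = ennreal (r j)" unfolding r_def using elim
        by (simp add: less_top)
      define S where "S = (\<Sum>j<J. (real j + 1) * r j)"
      have "(\<Sum>j<J. ennreal (real j + 1) * X j \<omega>) = (\<Sum>j<J. ennreal ((real j + 1) * r j))"
        using Xr r0 by (intro sum.cong refl) (simp add: ennreal_mult)
      also have "\<dots> = ennreal S" unfolding S_def using r0 by (intro sum_ennreal) simp
      finally have "ennreal x < ennreal S" using True unfolding A_def by simp
      then have xS: "x < S" using x by (simp add: ennreal_less_iff)
      have "Z \<omega> = (\<Prod>j<J. ennreal (exp (lam * (real j + 1) * r j)))" unfolding Z_def r_def by simp
      also have "\<dots> = ennreal (\<Prod>j<J. exp (lam * (real j + 1) * r j))" by (intro prod_ennreal) simp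
      also have "(\<Prod>j<J. exp (lam * (real j + 1) * r j)) = exp (\<Sum>j<J. lam * (real j + 1) * r j)"
        by (simp add: exp_sum)
      also have "(\<Sum>j<J. lam * (real j + 1) * r j) = lam * S" unfolding S_def
        by (simp add: sum_distrib_left mult.assoc)
      finally have ZS: "Z \<omega> = ennreal (exp (lam * S))" .
      have "exp (lam * x) \<le> exp (lam * S)" using xS lam by (simp add: mult_left_mono)
      then show ?thesis using True ZS by (simp add: ennreal_leI)
    qed
  qed
  then have "(\<integral>\<^sup>+ \<omega>. ennreal (exp (lam * x)) * indicator A \<omega> \<partial>M) \<le> (\<integral>\<^sup>+ \<omega>. Z \<omega> \<partial>M)"
    by (rule nn_integral_mono_AE)
  then have 1: "ennreal (exp (lam * x)) * emeasure M A \<le> R"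
    using PM As by (simp add: nn_integral_cmult_indicator)
  have e1: "ennreal (exp (- lam * x)) * ennreal (exp (lam * x)) = 1"
    by (simp add: ennreal_mult[symmetric] exp_add[symmetric])
  have "emeasure M A = ennreal (exp (- lam * x)) * (ennreal (exp (lam * x)) * emeasure M A)"
    by (simp only: mult.assoc[symmetric] e1 mult_1)
  also have "\<dots> \<le> ennreal (exp (- lam * x)) * R"
    by (rule mult_left_mono[OF 1]) simp
  finally show ?thesis unfolding A_def X_def R_def .
qed


lemma What_bound:
  fixes nu :: "real measure" and M :: "'w measure"
    and PP :: "'w \<Rightarrow> ('a::euclidean_space \<times> real) \<Rightarrow> nat" and U :: "'a set"
  assumes P: "poisson_pp M nu PP"
    and nu_sets: "sets nu = sets borel"
    and nu_support: "emeasure nu {..0} = 0"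
    and nu_locfin: "\<forall>a b. 0 < a \<longrightarrow> a \<le> b \<longrightarrow> emeasure nu {a..b} < \<infinity>"
    and U: "U \<in> sets lborel" "emeasure lborel U < \<infinity>" and m: "m > 0"
    and lam: "lam \<ge> 0" and x: "x \<ge> 0"
    and dl: "\<And>J. (\<Sum>j<J. enn2real (emeasure nu {m + real j <.. m + real j + 1}) * (exp (lam * (real j + 1)) - 1)) \<le> \<delta>"
  shows "emeasure M {\<omega> \<in> space M. ennreal x < What U m (PP \<omega>)}
    \<le> ennreal (exp (- lam * x)) * ennreal (exp (enn2real (emeasure lborel U) * \<delta>))"
proof -
  interpret prob_space M using P unfolding poisson_pp_def by blast
  note BF = Bj_facts[OF nu_sets nu_support nu_locfin U m]
  define X where "X j \<omega> = count_in (PP \<omega>) (Bj U m j)" for j \<omega>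
  have Xm[measurable]: "\<And>j. X j \<in> borel_measurable M"
    using P BF(1) unfolding poisson_pp_def X_def by blast
  define W where "W J \<omega> = (\<Sum>j<J. ennreal (real j + 1) * X j \<omega>)" for J \<omega>
  define A where "A J = {\<omega> \<in> space M. ennreal x < W J \<omega>}" for J
  have "\<And>J. A J \<in> sets M" unfolding A_def W_def by measurable
  then have As: "range A \<subseteq> sets M" by blast
  have inc: "incseq A"
  proof (rule incseq_SucI)
    fix J
    have "W J \<omega> \<le> W (Suc J) \<omega>" for \<omega> unfolding W_def by (intro sum_mono2) auto
    then show "A J \<subseteq> A (Suc J)" unfolding A_def using order.strict_trans2 by blast
  qed
  have Wsup: "What U m (PP \<omega>) = (SUP J. W J \<omega>)" for \<omega>
    unfolding What_def W_def X_def by (rule suminf_eq_SUP)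
  have un: "{\<omega> \<in> space M. ennreal x < What U m (PP \<omega>)} = (\<Union>J. A J)"
    unfolding A_def Wsup by (auto simp: less_SUP_iff)
  have bound: "emeasure M (A J) \<le> ennreal (exp (- lam * x)) * ennreal (exp (enn2real (emeasure lborel U) * \<delta>))" for J
  proof -
    define LU where "LU = enn2real (emeasure lborel U)"
    define nj where "nj j = enn2real (emeasure nu {m + real j <.. m + real j + 1})" for j
    define dj where "dj j = exp (lam * (real j + 1)) - 1" for j
    have LU0: "LU \<ge> 0" unfolding LU_def by simp
    have dj0: "dj j \<ge> 0" for j unfolding dj_def using lam by simp
    have cj: "enn2real (emeasure (lborel \<Otimes>\<^sub>M nu) (Bj U m j)) = LU * nj j" for j
      unfolding BF(2) LU_def nj_def by (rule enn2real_mult)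
    have "(\<Prod>j<J. ennreal (exp (enn2real (emeasure (lborel \<Otimes>\<^sub>M nu) (Bj U m j)) * (exp (lam * (real j + 1)) - 1))))
        = (\<Prod>j<J. ennreal (exp (LU * nj j * dj j)))" unfolding cj dj_def ..
    also have "\<dots> = ennreal (\<Prod>j<J. exp (LU * nj j * dj j))" by (intro prod_ennreal) simp
    also have "(\<Prod>j<J. exp (LU * nj j * dj j)) = exp (\<Sum>j<J. LU * nj j * dj j)" by (simp add: exp_sum)
    also have "(\<Sum>j<J. LU * nj j * dj j) = LU * (\<Sum>j<J. nj j * dj j)" by (simp add: sum_distrib_left mult.assoc)
    also have "\<dots> \<le> LU * \<delta>" using dl[of J] LU0 unfolding nj_def dj_def by (intro mult_left_mono) auto
    finally have pr: "(\<Prod>j<J. ennreal (exp (enn2real (emeasure (lborel \<Otimes>\<^sub>M nu) (Bj U m j)) * (exp (lam * (real j + 1)) - 1))))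
        \<le> ennreal (exp (LU * \<delta>))" by (simp add: ennreal_leI)
    have "emeasure M (A J) \<le> ennreal (exp (- lam * x)) *
       (\<Prod>j<J. ennreal (exp (enn2real (emeasure (lborel \<Otimes>\<^sub>M nu) (Bj U m j)) * (exp (lam * (real j + 1)) - 1))))"
      unfolding A_def W_def X_def by (rule WJ_bound[OF P nu_sets nu_support nu_locfin U m lam x])
    also have "\<dots> \<le> ennreal (exp (- lam * x)) * ennreal (exp (LU * \<delta>))"
      by (rule mult_left_mono[OF pr]) simp
    finally show ?thesis unfolding LU_def .
  qed
  have "emeasure M {\<omega> \<in> space M. ennreal x < What U m (PP \<omega>)} = (SUP J. emeasure M (A J))"
    unfolding un by (rule SUP_emeasure_incseq[OF As inc, symmetric])
  also have "\<dots> \<le> ennreal (exp (- lam * x)) * ennreal (exp (enn2real (emeasure lborel U) * \<delta>))"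
    by (rule SUP_least) (rule bound)
  finally show ?thesis .
qed


definition fm :: "real \<Rightarrow> real \<Rightarrow> real \<Rightarrow> ennreal" where
  "fm lam m t = ennreal (exp (lam * (t - m + 1)) - 1) * indicator {m<..} t"

lemma sum_le_fm:
  assumes lam: "lam \<ge> 0"
  shows "(\<Sum>j<J. ennreal (exp (lam * (real j + 1)) - 1) * indicator {m + real j <.. m + real j + 1} t) \<le> fm lam m t"
proof (cases "\<exists>j<J. t \<in> {m + real j <.. m + real j + 1}")
  case False
  then have "(\<Sum>j<J. ennreal (exp (lam * (real j + 1)) - 1) * indicator {m + real j <.. m + real j + 1} t) = 0"
    by (intro sum.neutral) auto
  then show ?thesis by simp
next
  case True
  then obtain j where j: "j < J" "t \<in> {m + real j <.. m + real j + 1}" by blast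
  define g where "g i = ennreal (exp (lam * (real i + 1)) - 1) * indicator {m + real i <.. m + real i + 1} t" for i
  have oth: "g i = 0" if "i \<in> {..<J} - {j}" for i
  proof -
    have "i \<noteq> j" using that by simp
    have "t \<notin> {m + real i <.. m + real i + 1}"
    proof
      assume ti: "t \<in> {m + real i <.. m + real i + 1}"
      then have "real i < real j + 1" "real j < real i + 1" using j(2) by auto
      then have "i = j" by linarith
      then show False using \<open>i \<noteq> j\<close> by simp
    qed
    then show ?thesis unfolding g_def by simp
  qed
  have "sum g {..<J} = g j + sum g ({..<J} - {j})" using j(1) by (intro sum.remove) auto
  also have "sum g ({..<J} - {j}) = 0" using oth by (intro sum.neutral) blast
  also have "g j = ennreal (exp (lam * (real j + 1)) - 1)" unfolding g_def using j(2) by simp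
  finally have s: "sum g {..<J} = ennreal (exp (lam * (real j + 1)) - 1)" by simp
  have tm: "t > m" using j(2) by simp
  have "real j + 1 \<le> t - m + 1" using j(2) by simp
  then have "exp (lam * (real j + 1)) \<le> exp (lam * (t - m + 1))" using lam by (simp add: mult_left_mono)
  then have "ennreal (exp (lam * (real j + 1)) - 1) \<le> fm lam m t"
    unfolding fm_def using tm by (simp add: ennreal_leI)
  then show ?thesis using s unfolding g_def by simp
qed

lemma delta_bound:
  fixes nu :: "real measure"
  assumes nu_sets: "sets nu = sets borel" and lam: "lam \<ge> 0"
    and fin: "(\<integral>\<^sup>+ t. fm lam m t \<partial>nu) < \<infinity>"
    and nfin: "\<And>j. emeasure nu {m + real j <.. m + real j + 1} < \<infinity>"
  shows "(\<Sum>j<J. enn2real (emeasure nu {m + real j <.. m + real j + 1}) * (exp (lam * (real j + 1)) - 1))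
       \<le> enn2real (\<integral>\<^sup>+ t. fm lam m t \<partial>nu)"
proof -
  have Is: "\<And>j. {m + real j <.. m + real j + 1} \<in> sets nu" using nu_sets by simp
  have d0: "\<And>j. exp (lam * (real j + 1)) - 1 \<ge> 0" using lam by simp
  have "(\<Sum>j<J. ennreal (exp (lam * (real j + 1)) - 1) * emeasure nu {m + real j <.. m + real j + 1})
     = (\<Sum>j<J. \<integral>\<^sup>+ t. ennreal (exp (lam * (real j + 1)) - 1) * indicator {m + real j <.. m + real j + 1} t \<partial>nu)"
    by (intro sum.cong refl nn_integral_cmult_indicator[symmetric] Is)
  also have "\<dots> = (\<integral>\<^sup>+ t. (\<Sum>j<J. ennreal (exp (lam * (real j + 1)) - 1) * indicator {m + real j <.. m + real j + 1} t) \<partial>nu)"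
  proof (rule nn_integral_sum[symmetric])
    fix j show "(\<lambda>t. ennreal (exp (lam * (real j + 1)) - 1) * indicator {m + real j <.. m + real j + 1} t) \<in> borel_measurable nu"
      using Is by measurable
  qed
  also have "\<dots> \<le> (\<integral>\<^sup>+ t. fm lam m t \<partial>nu)"
    by (intro nn_integral_mono sum_le_fm lam)
  finally have le: "(\<Sum>j<J. ennreal (exp (lam * (real j + 1)) - 1) * emeasure nu {m + real j <.. m + real j + 1})
     \<le> (\<integral>\<^sup>+ t. fm lam m t \<partial>nu)" .
  define S where "S = (\<Sum>j<J. enn2real (emeasure nu {m + real j <.. m + real j + 1}) * (exp (lam * (real j + 1)) - 1))"
  have S0: "S \<ge> 0" unfolding S_def using d0 by (intro sum_nonneg mult_nonneg_nonneg) auto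
  have e: "ennreal (exp (lam * (real j + 1)) - 1) * emeasure nu {m + real j <.. m + real j + 1}
        = ennreal (enn2real (emeasure nu {m + real j <.. m + real j + 1}) * (exp (lam * (real j + 1)) - 1))" for j
  proof -
    define e where "e = emeasure nu {m + real j <.. m + real j + 1}"
    define d where "d = exp (lam * (real j + 1)) - 1"
    have ee: "e = ennreal (enn2real e)" unfolding e_def using nfin[of j] by simp
    have "ennreal d * e = ennreal d * ennreal (enn2real e)" by (subst ee) (rule refl)
    also have "\<dots> = ennreal (d * enn2real e)" using d0[of j] unfolding d_def by (intro ennreal_mult[symmetric]) auto
    also have "d * enn2real e = enn2real e * d" by (rule mult.commute)
    finally show ?thesis unfolding e_def d_def .
  qed
  have "(\<Sum>j<J. ennreal (exp (lam * (real j + 1)) - 1) * emeasure nu {m + real j <.. m + real j + 1})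
      = (\<Sum>j<J. ennreal (enn2real (emeasure nu {m + real j <.. m + real j + 1}) * (exp (lam * (real j + 1)) - 1)))"
    by (intro sum.cong refl e)
  also have "\<dots> = ennreal S" unfolding S_def using d0 by (intro sum_ennreal) auto
  finally have "ennreal S \<le> (\<integral>\<^sup>+ t. fm lam m t \<partial>nu)" using le by simp
  moreover have "(\<integral>\<^sup>+ t. fm lam m t \<partial>nu) < top" using fin by simp
  ultimately have "enn2real (ennreal S) \<le> enn2real (\<integral>\<^sup>+ t. fm lam m t \<partial>nu)" by (rule enn2real_mono)
  then show ?thesis using S0 unfolding S_def by simp
qed


lemma exists_m:
  fixes nu :: "real measure"
  assumes nu_sets: "sets nu = sets borel" and lam: "lam \<ge> 0"
    and mom: "(\<integral>\<^sup>+ t \<in> {0<..}. ennreal (exp (lam * t) - 1) \<partial>nu) < \<infinity>"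
    and eta: "\<eta> > 0"
  shows "\<exists>m\<ge>1. (\<integral>\<^sup>+ t. fm lam m t \<partial>nu) < ennreal \<eta>"
proof -
  define F where "F n t = fm lam (real n + 1) t" for n t
  have mc: "measurable nu (borel :: ennreal measure) = measurable borel borel"
    by (rule measurable_cong_sets[OF nu_sets refl])
  have Fm: "\<And>n. F n \<in> borel_measurable nu"
    unfolding mc F_def fm_def by measurable
  have dec: "decseq F"
  proof (rule decseq_SucI, rule le_funI)
    fix n t
    show "F (Suc n) t \<le> F n t"
    proof (cases "t > real (Suc n) + 1")
      case False
      then show ?thesis unfolding F_def fm_def by simp
    next
      case True
      then have t: "t > real n + 1" by simp
      have "exp (lam * (t - (real (Suc n) + 1) + 1)) \<le> exp (lam * (t - (real n + 1) + 1))"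
        using lam by (simp add: mult_left_mono)
      then show ?thesis unfolding F_def fm_def using True t by (simp add: ennreal_leI)
    qed
  qed
  have F0: "(\<integral>\<^sup>+ t. F 0 t \<partial>nu) < \<infinity>"
  proof -
    have "(\<integral>\<^sup>+ t. F 0 t \<partial>nu) \<le> (\<integral>\<^sup>+ t \<in> {0<..}. ennreal (exp (lam * t) - 1) \<partial>nu)"
    proof (rule nn_integral_mono)
      fix t
      show "F 0 t \<le> ennreal (exp (lam * t) - 1) * indicator {0<..} t"
        unfolding F_def fm_def by (simp add: indicator_def)
    qed
    then show ?thesis using mom by (rule order.strict_trans1)
  qed
  have inf0: "(INF n. F n t) = 0" for t
  proof -
    define n where "n = nat \<lceil>t\<rceil>"
    have "t \<le> real n + 1" unfolding n_def by linarith
    then have "F n t = 0" unfolding F_def fm_def by simp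
    then have "(INF n. F n t) \<le> 0" by (metis INF_lower UNIV_I)
    then show ?thesis by simp
  qed
  have "(\<integral>\<^sup>+ t. (INF n. F n t) \<partial>nu) = (INF n. \<integral>\<^sup>+ t. F n t \<partial>nu)"
    by (rule nn_integral_monotone_convergence_INF_decseq[OF dec Fm F0])
  then have "(INF n. \<integral>\<^sup>+ t. F n t \<partial>nu) = 0" unfolding inf0 by simp
  then have "(INF n. \<integral>\<^sup>+ t. F n t \<partial>nu) < ennreal \<eta>" using eta by simp
  then obtain n where "(\<integral>\<^sup>+ t. F n t \<partial>nu) < ennreal \<eta>" by (auto simp: INF_less_iff)
  then show ?thesis unfolding F_def by (intro exI[of _ "real n + 1"]) simp
qed


lemma arith_final:
  fixes l L lam \<epsilon> d K \<delta> N :: real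
  assumes l: "l \<ge> 1" and L: "L > 0" and lam: "lam > 0" and eps: "\<epsilon> > 0" and d: "d \<ge> 0"
    and Lbig: "32 * d * ln 5 \<le> lam * \<epsilon> * L" and K: "K > 0" and dl0: "\<delta> \<ge> 0"
    and dl: "\<delta> \<le> lam * \<epsilon> / (8 * ((4 / L + 1) * K))"
    and N0: "N \<ge> 0" and N: "N \<le> 4 * l / L"
  shows "lam * \<epsilon> * l / 4 \<le> lam * \<epsilon> * l / 2 - d * N * ln 5 - (N + 1) * K * \<delta>"
proof -
  have ln5: "ln (5::real) \<ge> 0" by simp
  have "d * N * ln 5 \<le> d * (4 * l / L) * ln 5"
    using N d ln5 by (intro mult_right_mono mult_left_mono) auto
  also have "\<dots> = (32 * d * ln 5) * l / (8 * L)" by (simp add: field_simps)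
  also have "\<dots> \<le> (lam * \<epsilon> * L) * l / (8 * L)"
    using Lbig l L by (intro divide_right_mono mult_right_mono) auto
  also have "\<dots> = lam * \<epsilon> * l / 8" using L by (simp add: field_simps)
  finally have t1: "d * N * ln 5 \<le> lam * \<epsilon> * l / 8" .
  have "N + 1 \<le> 4 * l / L + l" using N l by linarith
  also have "\<dots> = (4 / L + 1) * l" by (simp add: field_simps)
  finally have N1: "N + 1 \<le> (4 / L + 1) * l" .
  have C: "(4 / L + 1) * K > 0" using L K by (simp add: add_pos_pos)
  have "(N + 1) * K * \<delta> \<le> ((4 / L + 1) * l) * K * \<delta>"
    using N1 K dl0 by (intro mult_right_mono) auto
  also have "\<dots> = l * (((4 / L + 1) * K) * \<delta>)" by (simp add: ac_simps)
  also have "\<dots> \<le> l * (((4 / L + 1) * K) * (lam * \<epsilon> / (8 * ((4 / L + 1) * K))))"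
    using dl C l by (intro mult_left_mono) auto
  also have "\<dots> = lam * \<epsilon> * l / 8"
  proof -
    define c where "c = (4 / L + 1) * K"
    have "c > 0" using C unfolding c_def .
    then have "l * (c * (lam * \<epsilon> / (8 * c))) = lam * \<epsilon> * l / 8" by (simp add: field_simps)
    then show ?thesis unfolding c_def .
  qed
  finally have t2: "(N + 1) * K * \<delta> \<le> lam * \<epsilon> * l / 8" .
  show ?thesis using t1 t2 by linarith
qed


lemma What_meas:
  fixes nu :: "real measure" and M :: "'w measure"
    and PP :: "'w \<Rightarrow> ('a::euclidean_space \<times> real) \<Rightarrow> nat" and U :: "'a set"
  assumes P: "poisson_pp M nu PP"
    and nu_sets: "sets nu = sets borel"
    and nu_support: "emeasure nu {..0} = 0"
    and nu_locfin: "\<forall>a b. 0 < a \<longrightarrow> a \<le> b \<longrightarrow> emeasure nu {a..b} < \<infinity>"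
    and U: "U \<in> sets lborel" "emeasure lborel U < \<infinity>" and m: "m > 0"
  shows "(\<lambda>\<omega>. What U m (PP \<omega>)) \<in> borel_measurable M"
proof -
  note BF = Bj_facts[OF nu_sets nu_support nu_locfin U m]
  have Xm[measurable]: "\<And>j. (\<lambda>\<omega>. count_in (PP \<omega>) (Bj U m j)) \<in> borel_measurable M"
    using P BF(1) unfolding poisson_pp_def by blast
  show ?thesis unfolding What_def by measurable
qed

lemma outer_prob_le:
  assumes "prob_space M" "G \<in> sets M" "S \<inter> space M \<subseteq> G"
  shows "outer_prob M S \<le> measure M G" and "outer_prob M S \<ge> 0"
proof -
  have bdd: "bdd_below {measure M T | T. T \<in> sets M \<and> S \<inter> space M \<subseteq> T}"
    by (rule bdd_belowI[of _ 0]) auto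
  show "outer_prob M S \<le> measure M G" unfolding outer_prob_def
    by (rule cInf_lower[OF _ bdd]) (use assms in blast)
  show "outer_prob M S \<ge> 0" unfolding outer_prob_def
    by (rule cInf_greatest) (use assms in auto)
qed


lemma main_bound:
  fixes nu :: "real measure" and M :: "'w measure"
    and PP :: "'w \<Rightarrow> ('a::euclidean_space \<times> real) \<Rightarrow> nat"
  assumes P: "poisson_pp M nu PP"
    and nu_sets: "sets nu = sets borel"
    and nu_support: "emeasure nu {..0} = 0"
    and nu_locfin: "\<forall>a b. 0 < a \<longrightarrow> a \<le> b \<longrightarrow> emeasure nu {a..b} < \<infinity>"
    and L: "L > 0" and m: "m > 0" and lam: "lam \<ge> 0" and eps: "\<epsilon> > 0" and l: "l > 0"
    and dl: "\<And>J. (\<Sum>j<J. enn2real (emeasure nu {m + real j <.. m + real j + 1}) * (exp (lam * (real j + 1)) - 1)) \<le> \<delta>"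
    and dl0: "\<delta> \<ge> 0"
  shows "outer_prob M {\<omega> \<in> space M. A_max l (Pi2 m (PP \<omega>)) \<ge> ennreal (\<epsilon> * l)}
     \<le> real (card (D L :: 'a set)) ^ (nat \<lfloor>4 * l / L\<rfloor>) * (exp (- lam * (\<epsilon> * l / 2)) * exp ((real (nat \<lfloor>4 * l / L\<rfloor>) + 1) * (4 * L) ^ DIM('a) * \<delta>))"
proof -
  interpret prob_space M using P unfolding poisson_pp_def by blast
  define N where "N = nat \<lfloor>4 * l / L\<rfloor>"
  define K where "K = (4 * L) ^ DIM('a)"
  define Bd where "Bd = exp (- lam * (\<epsilon> * l / 2)) * exp ((real N + 1) * K * \<delta>)"
  define S where "S = {ss :: 'a list. set ss \<subseteq> D L \<and> length ss = N}"
  have finS: "finite S" unfolding S_def by (rule finite_lists_length_eq[OF finite_D])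
  have cardS: "card S = card (D L :: 'a set) ^ N" unfolding S_def by (rule card_lists_length_eq[OF finite_D])
  define G where "G ss = {\<omega> \<in> space M. ennreal (\<epsilon> * l / 2) < What (Cover L ss) m (PP \<omega>)}" for ss :: "'a list"
  have CovM: "emeasure lborel (Cover L ss) \<le> ennreal ((real (length ss) + 1) * K)" for ss :: "'a list"
    unfolding K_def using L by (intro Cover_measure) simp
  have CovF: "emeasure lborel (Cover L ss) < \<infinity>" for ss :: "'a list"
    using CovM[of ss] by (simp add: le_less_trans)
  have Gm: "G ss \<in> sets M" for ss
  proof -
    have [measurable]: "(\<lambda>\<omega>. What (Cover L ss) m (PP \<omega>)) \<in> borel_measurable M"
      by (rule What_meas[OF P nu_sets nu_support nu_locfin Cover_sets CovF m])
    show ?thesis unfolding G_def by measurable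
  qed
  have sub: "{\<omega> \<in> space M. A_max l (Pi2 m (PP \<omega>)) \<ge> ennreal (\<epsilon> * l)} \<inter> space M \<subseteq> (\<Union>ss\<in>S. G ss)"
  proof
    fix \<omega> assume "\<omega> \<in> {\<omega> \<in> space M. A_max l (Pi2 m (PP \<omega>)) \<ge> ennreal (\<epsilon> * l)} \<inter> space M"
    then have om: "\<omega> \<in> space M" and Ab: "A_max l (Pi2 m (PP \<omega>)) \<ge> ennreal (\<epsilon> * l)" by auto
    have "ennreal (\<epsilon> * l / 2) < ennreal (\<epsilon> * l)" using eps l by (intro ennreal_lessI) auto
    then have "ennreal (\<epsilon> * l / 2) < A_max l (Pi2 m (PP \<omega>))" using Ab by (rule order.strict_trans2)
    then obtain VE where VE: "VE \<in> {(V, E). animal V E \<and> 0 \<in> V \<and> animal_length E \<le> l}"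
      and lt: "ennreal (\<epsilon> * l / 2) < mass (fst VE) (Pi2 m (PP \<omega>))"
      unfolding A_max_def by (auto simp: less_SUP_iff)
    obtain V E where VEe: "VE = (V, E)" by (cases VE)
    have an: "animal V E" "0 \<in> V" "animal_length E \<le> l" using VE VEe by auto
    obtain ss where ss: "set ss \<subseteq> D L" "length ss = N" "V \<subseteq> Cover L ss"
      using animal_cover[OF L an] unfolding N_def by blast
    have "mass V (Pi2 m (PP \<omega>)) \<le> What (Cover L ss) m (PP \<omega>)" by (rule mass_le_What[OF ss(3)])
    then have "\<omega> \<in> G ss" unfolding G_def using lt VEe om by (auto intro: order.strict_trans2)
    moreover have "ss \<in> S" unfolding S_def using ss by simp
    ultimately show "\<omega> \<in> (\<Union>ss\<in>S. G ss)" by blast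
  qed
  have Gb: "measure M (G ss) \<le> Bd" if "ss \<in> S" for ss
  proof -
    have len: "length ss = N" using that unfolding S_def by simp
    define LU where "LU = enn2real (emeasure lborel (Cover L ss))"
    have "LU \<le> enn2real (ennreal ((real (length ss) + 1) * K))"
      unfolding LU_def by (rule enn2real_mono[OF CovM]) simp
    also have "\<dots> = (real N + 1) * K" using len L unfolding K_def by simp
    finally have LUb: "LU \<le> (real N + 1) * K" .
    have "emeasure M (G ss) \<le> ennreal (exp (- lam * (\<epsilon> * l / 2))) * ennreal (exp (LU * \<delta>))"
      unfolding G_def LU_def
      by (rule What_bound[OF P nu_sets nu_support nu_locfin Cover_sets CovF m lam _ dl]) (use eps l in simp)
    also have "\<dots> = ennreal (exp (- lam * (\<epsilon> * l / 2)) * exp (LU * \<delta>))" by (simp add: ennreal_mult)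
    also have "\<dots> \<le> ennreal Bd"
    proof (rule ennreal_leI)
      have "LU * \<delta> \<le> (real N + 1) * K * \<delta>" using LUb dl0 by (rule mult_right_mono)
      then show "exp (- lam * (\<epsilon> * l / 2)) * exp (LU * \<delta>) \<le> Bd" unfolding Bd_def by simp
    qed
    finally have "ennreal (measure M (G ss)) \<le> ennreal Bd" by (simp add: emeasure_eq_measure)
    moreover have "Bd \<ge> 0" unfolding Bd_def by simp
    ultimately show ?thesis by (simp add: ennreal_le_iff)
  qed
  have "outer_prob M {\<omega> \<in> space M. A_max l (Pi2 m (PP \<omega>)) \<ge> ennreal (\<epsilon> * l)} \<le> measure M (\<Union>ss\<in>S. G ss)"
    by (rule outer_prob_le(1)[OF prob_space_axioms _ sub]) (use finS Gm in auto)
  also have "\<dots> \<le> (\<Sum>ss\<in>S. measure M (G ss))" by (rule measure_UNION_le[OF finS Gm])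
  also have "\<dots> \<le> (\<Sum>ss\<in>S. Bd)" by (rule sum_mono[OF Gb])
  also have "\<dots> = real (card S) * Bd" by simp
  finally show ?thesis unfolding cardS Bd_def N_def K_def by simp
qed


theorem lemma5p10:
  fixes nu :: "real measure" and M :: "'w measure"
    and PP :: "'w \<Rightarrow> ('a::euclidean_space \<times> real) \<Rightarrow> nat"
  assumes dim: "DIM('a) \<ge> 2"
    and nu_sets: "sets nu = sets borel"
    and nu_support: "emeasure nu {..0} = 0"
    and nu_locfin: "\<forall>a b. 0 < a \<longrightarrow> a \<le> b \<longrightarrow> emeasure nu {a..b} < \<infinity>"
    and nu_nonzero: "emeasure nu (space nu) \<noteq> 0"
    and poisson: "poisson_pp M nu PP"
    and moment: "\<exists>lam>0. (\<integral>\<^sup>+ t \<in> {0<..}. ennreal (exp (lam * t) - 1) \<partial>nu) < \<infinity>"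
  shows "\<forall>\<epsilon>>0. \<exists>m>0.
           Liminf at_top (\<lambda>l::real. ereal (1 / l) *
             neg_log (outer_prob M {\<omega> \<in> space M. A_max l (Pi2 m (PP \<omega>)) \<ge> ennreal (\<epsilon> * l)})) > 0"
proof (intro allI impI)
  fix \<epsilon> :: real assume eps: "\<epsilon> > 0"
  obtain lam where lam: "lam > 0" and mom: "(\<integral>\<^sup>+ t \<in> {0<..}. ennreal (exp (lam * t) - 1) \<partial>nu) < \<infinity>"
    using moment by blast
  have ps: "prob_space M" using poisson unfolding poisson_pp_def by blast
  define d where "d = real DIM('a)"
  have d0: "d \<ge> 0" unfolding d_def by simp
  define L where "L = max 1 (32 * d * ln 5 / (lam * \<epsilon>))"
  have L1: "L \<ge> 1" unfolding L_def by simp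
  have L0: "L > 0" using L1 by simp
  have le_eps: "lam * \<epsilon> > 0" using lam eps by simp
  have "32 * d * ln 5 / (lam * \<epsilon>) \<le> L" unfolding L_def by simp
  then have "32 * d * ln 5 \<le> L * (lam * \<epsilon>)" using le_eps by (simp add: divide_le_eq)
  then have Lbig: "32 * d * ln 5 \<le> lam * \<epsilon> * L" by (simp add: mult.commute)
  define K where "K = (4 * L) ^ DIM('a)"
  have K0: "K > 0" unfolding K_def using L0 by simp
  define \<eta> where "\<eta> = lam * \<epsilon> / (8 * ((4 / L + 1) * K))"
  have C0: "(4 / L + 1) * K > 0" using L0 K0 by (simp add: add_pos_pos)
  have eta0: "\<eta> > 0" unfolding \<eta>_def using le_eps C0 by simp
  obtain m where m1: "m \<ge> 1" and meta: "(\<integral>\<^sup>+ t. fm lam m t \<partial>nu) < ennreal \<eta>"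
    using exists_m[OF nu_sets _ mom eta0] lam by auto
  have m0: "m > 0" using m1 by simp
  define \<delta> where "\<delta> = enn2real (\<integral>\<^sup>+ t. fm lam m t \<partial>nu)"
  have fin: "(\<integral>\<^sup>+ t. fm lam m t \<partial>nu) < \<infinity>" using meta by (simp add: less_trans)
  have dl0: "\<delta> \<ge> 0" unfolding \<delta>_def by simp
  have "\<delta> \<le> enn2real (ennreal \<eta>)" unfolding \<delta>_def using meta by (intro enn2real_mono) auto
  then have dleta: "\<delta> \<le> \<eta>" using eta0 by simp
  have nfin: "emeasure nu {m + real j <.. m + real j + 1} < \<infinity>" for j
  proof -
    have "emeasure nu {m + real j <.. m + real j + 1} \<le> emeasure nu {m + real j .. m + real j + 1}"
      using nu_sets by (intro emeasure_mono) auto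
    also have "\<dots> < \<infinity>" using nu_locfin m0 by simp
    finally show ?thesis .
  qed
  have dl: "(\<Sum>j<J. enn2real (emeasure nu {m + real j <.. m + real j + 1}) * (exp (lam * (real j + 1)) - 1)) \<le> \<delta>" for J
    unfolding \<delta>_def by (rule delta_bound[OF nu_sets _ fin nfin]) (use lam in simp)
  have ev: "eventually (\<lambda>l::real. ereal (lam * \<epsilon> / 4) \<le> ereal (1 / l) *
             neg_log (outer_prob M {\<omega> \<in> space M. A_max l (Pi2 m (PP \<omega>)) \<ge> ennreal (\<epsilon> * l)})) at_top"
    unfolding eventually_at_top_linorder
  proof (intro exI[of _ 1] allI impI)
    fix l :: real assume l1: "l \<ge> 1"
    have l0: "l > 0" using l1 by simp
    define p where "p = outer_prob M {\<omega> \<in> space M. A_max l (Pi2 m (PP \<omega>)) \<ge> ennreal (\<epsilon> * l)}"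
    define N where "N = nat \<lfloor>4 * l / L\<rfloor>"
    define cS where "cS = real (card (D L :: 'a set))"
    have pb: "p \<le> cS ^ N * (exp (- lam * (\<epsilon> * l / 2)) * exp ((real N + 1) * K * \<delta>))"
      unfolding p_def cS_def N_def K_def
      by (rule main_bound[OF poisson nu_sets nu_support nu_locfin L0 m0 _ eps l0 dl dl0]) (use lam in simp)
    have p0: "p \<ge> 0" unfolding p_def
      by (rule outer_prob_le(2)[OF ps sets.top]) auto
    show "ereal (lam * \<epsilon> / 4) \<le> ereal (1 / l) * neg_log p"
    proof (cases "p = 0")
      case True
      then show ?thesis using l0 by (simp add: neg_log_def)
    next
      case False
      then have pp: "p > 0" using p0 by simp
      define E1 where "E1 = exp (- lam * (\<epsilon> * l / 2)) * exp ((real N + 1) * K * \<delta>)"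
      have E1p: "E1 > 0" unfolding E1_def by simp
      have "cS ^ N * E1 > 0" using pp pb unfolding E1_def by linarith
      then have cSN: "cS ^ N > 0" using E1p by (simp add: zero_less_mult_iff)
      have cS0: "cS \<ge> 0" unfolding cS_def by simp
      have "card (D L :: 'a set) > 0" using finite_D[of L] zero_D[of L] by (auto simp: card_gt_0_iff)
      then have cSp: "cS > 0" unfolding cS_def by simp
      have "ln p \<le> ln (cS ^ N * E1)" using pp pb unfolding E1_def by (intro ln_mono) auto
      also have "\<dots> = real N * ln cS + (- lam * (\<epsilon> * l / 2)) + (real N + 1) * K * \<delta>"
        using cSp unfolding E1_def by (simp add: ln_mult ln_realpow)
      finally have lnp: "ln p \<le> real N * ln cS + (- lam * (\<epsilon> * l / 2)) + (real N + 1) * K * \<delta>" .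
      have "cS \<le> 5 ^ DIM('a)" unfolding cS_def using card_D[of L] by (simp add: of_nat_le_iff[symmetric])
      then have "ln cS \<le> ln (5 ^ DIM('a))" using cSp by (intro ln_mono) auto
      also have "\<dots> = d * ln 5" unfolding d_def by (simp add: ln_realpow)
      finally have lncS: "ln cS \<le> d * ln 5" .
      have "real N * ln cS \<le> real N * (d * ln 5)" using lncS by (intro mult_left_mono) auto
      then have NcS: "real N * ln cS \<le> d * real N * ln 5" by (simp add: ac_simps)
      have x0: "4 * l / L \<ge> 0" using l0 L0 by simp
      have N0: "real N \<le> 4 * l / L" unfolding N_def using x0 by linarith
      have ar: "lam * \<epsilon> * l / 4 \<le> lam * \<epsilon> * l / 2 - d * real N * ln 5 - (real N + 1) * K * \<delta>"
        by (rule arith_final[OF l1 L0 lam eps d0 Lbig K0 dl0 _ _ N0]) (use dleta in \<open>simp_all add: \<eta>_def\<close>)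
      have e1: "- lam * (\<epsilon> * l / 2) = - (lam * \<epsilon> * l) / 2" by (simp add: algebra_simps)
      have lnp2: "ln p \<le> real N * ln cS + (- (lam * \<epsilon> * l) / 2) + (real N + 1) * K * \<delta>"
        using lnp unfolding e1 .
      have mlp: "lam * \<epsilon> * l / 4 \<le> - ln p" using lnp2 NcS ar by linarith
      have "lam * \<epsilon> / 4 \<le> 1 / l * (- ln p)"
      proof -
        have "lam * \<epsilon> / 4 = 1 / l * (lam * \<epsilon> * l / 4)" using l0 by simp
        also have "\<dots> \<le> 1 / l * (- ln p)" using mlp l0 by (intro mult_left_mono) auto
        finally show ?thesis .
      qed
      then show ?thesis using False by (simp add: neg_log_def)
    qed
  qed
  have liminf: "ereal (lam * \<epsilon> / 4) \<le> Liminf at_top (\<lambda>l::real. ereal (1 / l) *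
             neg_log (outer_prob M {\<omega> \<in> space M. A_max l (Pi2 m (PP \<omega>)) \<ge> ennreal (\<epsilon> * l)}))"
    by (rule Liminf_bounded[OF ev])
  have pos: "(0::ereal) < ereal (lam * \<epsilon> / 4)" using le_eps by simp
  have "0 < Liminf at_top (\<lambda>l::real. ereal (1 / l) *
             neg_log (outer_prob M {\<omega> \<in> space M. A_max l (Pi2 m (PP \<omega>)) \<ge> ennreal (\<epsilon> * l)}))"
    using order.strict_trans2[OF pos liminf] .
  then show "\<exists>m>0. Liminf at_top (\<lambda>l::real. ereal (1 / l) *
             neg_log (outer_prob M {\<omega> \<in> space M. A_max l (Pi2 m (PP \<omega>)) \<ge> ennreal (\<epsilon> * l)})) > 0"
    using m0 by blast
qed


end
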